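(* Let $q\ge2$ be even, $n\ge1$, $p\ge1$, let $\sigma$ be a permutation of $\mathbb{Z}_2^n$, and let $g:\mathbb{Z}_2^n\to\mathbb{Z}_q$ satisfy $g(y)\equiv\sum_{j=0}^{p-1}2^ja_j(y)\pmod q$ for Boolean functions $a_0,\dots,a_{p-1}$ on $\mathbb{Z}_2^n$. Let $f:\mathbb{Z}_2^n\times\mathbb{Z}_2^n\to\mathbb{Z}_q$, $f(x,y)=\frac q2\,x\cdot\sigma(y)+g(y)$, and for $i\in\{0,\dots,2^p-1\}$ let $g_i(x,y)=x\cdot\sigma(y)\oplus z_{i,0}a_0(y)\oplus\cdots\oplus z_{i,p-1}a_{p-1}(y)$, a Boolean function on $\mathbb{Z}_2^{2n}$. Then every $g_i$ is bent, and for every $u\in\mathbb{Z}_2^{2n}$ there exist $r\in\{0,\dots,2^p-1\}$ and $\epsilon\in\{\pm1\}$ with $(W_{g_0}(u),\dots,W_{g_{2^p-1}}(u))=\epsilon H^{(r)}_{2^p}$. Equivalently, for every $u$, every $t\in\{1,\dots,p\}$ and every $i\in\{0,\dots,2^{t-1}-1\}$, the product $W_{g_i}(u)W_{g_{i+2^{t-1}}}(u)\in\{\pm1\}$ depends only on $u$ and $t$ (not on $i$).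
   Context: For $i\in\{0,\dots,2^m-1\}$, $z_i=(z_{i,0},\dots,z_{i,m-1})\in\mathbb{Z}_2^m$ is the binary vector with $i=\sum_j z_{i,j}2^j$. $H_{2^m}$ is the Sylvester–Hadamard matrix with entries $(H_{2^m})_{k,i}=(-1)^{z_k\cdot z_i}$, and $H^{(r)}_{2^m}$ its $r$-th row. For a Boolean function $G$ on $\mathbb{Z}_2^{N}$, $W_G(u)=2^{-N/2}\sum_{v\in\mathbb{Z}_2^N}(-1)^{G(v)\oplus u\cdot v}$, and $G$ is bent if $|W_G(u)|=1$ for all $u$. *)

theory Defs
  imports Complex_Main
begin

text \<open>Vectors of Z_2^n: functions nat => bool vanishing at indices >= n.\<close>
definition vecs :: "nat \<Rightarrow> (nat \<Rightarrow> bool) set" where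
  "vecs n = {x. \<forall>i\<ge>n. \<not> x i}"

text \<open>Inner product over Z_2 (as a bool, True = 1).\<close>
definition dotp :: "nat \<Rightarrow> (nat \<Rightarrow> bool) \<Rightarrow> (nat \<Rightarrow> bool) \<Rightarrow> bool" where
  "dotp n x y = odd (card {i. i < n \<and> x i \<and> y i})"

text \<open>Z_2^{2n} identified with Z_2^n x Z_2^n; u.v = u1.v1 xor u2.v2.\<close>
definition dotp2 :: "nat \<Rightarrow> (nat \<Rightarrow> bool) \<times> (nat \<Rightarrow> bool) \<Rightarrow> (nat \<Rightarrow> bool) \<times> (nat \<Rightarrow> bool) \<Rightarrow> bool" where
  "dotp2 n u v = (dotp n (fst u) (fst v) \<noteq> dotp n (snd u) (snd v))"

definition sgn_bool :: "bool \<Rightarrow> real" where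
  "sgn_bool b = (if b then -1 else 1)"

definition walsh2 :: "nat \<Rightarrow> ((nat \<Rightarrow> bool) \<times> (nat \<Rightarrow> bool) \<Rightarrow> bool)
    \<Rightarrow> (nat \<Rightarrow> bool) \<times> (nat \<Rightarrow> bool) \<Rightarrow> real" where
  "walsh2 n G u = 2 powr (- real (2*n) / 2) *
     (\<Sum>v\<in>vecs n \<times> vecs n. sgn_bool (G v \<noteq> dotp2 n u v))"

definition bent2 :: "nat \<Rightarrow> ((nat \<Rightarrow> bool) \<times> (nat \<Rightarrow> bool) \<Rightarrow> bool) \<Rightarrow> bool" where
  "bent2 n G = (\<forall>u\<in>vecs n \<times> vecs n. \<bar>walsh2 n G u\<bar> = 1)"

text \<open>Entry (k,i) of the Sylvester--Hadamard matrix H_{2^m}: (-1)^(z_k . z_i),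
  where z_i is the binary expansion of i (bit j = coefficient of 2^j).\<close>
definition hadamard :: "nat \<Rightarrow> nat \<Rightarrow> nat \<Rightarrow> real" where
  "hadamard m k i = sgn_bool (odd (card {j. j < m \<and> bit k j \<and> bit i j}))"

end

theory Submission imports Defs begin

unbundle bit_operations_syntax


lemma sgn_xor: "sgn_bool (a \<noteq> b) = sgn_bool a * sgn_bool b"
  by (simp add: sgn_bool_def)

lemma sgn_bool_neg: "sgn_bool (\<not> b) = - sgn_bool b"
  by (simp add: sgn_bool_def)

lemma odd_card_symdiff:
  assumes "finite A" "finite B"
  shows "odd (card ((A - B) \<union> (B - A))) = (odd (card A) \<noteq> odd (card B))"
proof -
  have c1: "card A = card (A - B) + card (A \<inter> B)"
    using assms by (metis Int_Diff_disjoint Un_Diff_Int card_Un_disjoint finite_Diff finite_Int inf_commute)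
  have c2: "card B = card (B - A) + card (A \<inter> B)"
    using assms by (metis Int_Diff_disjoint Un_Diff_Int card_Un_disjoint finite_Diff finite_Int inf_commute)
  have c3: "card ((A - B) \<union> (B - A)) = card (A - B) + card (B - A)"
    using assms by (intro card_Un_disjoint) auto
  show ?thesis using c1 c2 c3 by auto
qed

lemma dotp_xor: "(dotp n x a \<noteq> dotp n u x) = dotp n x (\<lambda>i. a i \<noteq> u i)"
proof -
  let ?A = "{i. i < n \<and> x i \<and> a i}" and ?B = "{i. i < n \<and> u i \<and> x i}"
  have "{i. i < n \<and> x i \<and> (a i \<noteq> u i)} = (?A - ?B) \<union> (?B - ?A)" by auto
  moreover have "finite ?A" "finite ?B" by auto
  ultimately show ?thesis unfolding dotp_def using odd_card_symdiff[of ?A ?B] by simp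
qed

lemma vecs_finite_card: "finite (vecs n) \<and> card (vecs n) = 2 ^ n"
proof -
  have b: "bij_betw (\<lambda>S i. i \<in> S) (Pow {..<n}) (vecs n)"
    by (rule bij_betw_byWitness[where f' = "\<lambda>x. {i. x i}"]) (auto simp: vecs_def not_le[symmetric])
  have "finite (vecs n)" using bij_betw_finite[OF b] by simp
  moreover have "card (vecs n) = 2 ^ n" using bij_betw_same_card[OF b] card_Pow[of "{..<n}"] by simp
  ultimately show ?thesis by simp
qed

lemma flip_vecs:
  assumes kn: "k < n" and x: "x \<in> vecs n"
  shows "x(k := \<not> x k) \<in> vecs n"
proof -
  have "\<not> (x(k := \<not> x k)) i" if "i \<ge> n" for i
  proof -
    have "i \<noteq> k" using that kn by simp
    then have "(x(k := \<not> x k)) i = x i" by simp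
    moreover have "\<not> x i" using x that unfolding vecs_def by simp
    ultimately show ?thesis by simp
  qed
  then show ?thesis unfolding vecs_def by simp
qed

lemma flip_bij:
  assumes kn: "k < n"
  shows "bij_betw (\<lambda>x. x(k := \<not> x k)) (vecs n) (vecs n)"
proof (rule bij_betw_byWitness[where f' = "\<lambda>x. x(k := \<not> x k)"])
  show "\<forall>a\<in>vecs n. (a(k := \<not> a k))(k := \<not> (a(k := \<not> a k)) k) = a" by simp
  show "\<forall>a\<in>vecs n. (a(k := \<not> a k))(k := \<not> (a(k := \<not> a k)) k) = a" by simp
  show "(\<lambda>x. x(k := \<not> x k)) ` vecs n \<subseteq> vecs n" using flip_vecs[OF kn] by blast
  show "(\<lambda>x. x(k := \<not> x k)) ` vecs n \<subseteq> vecs n" using flip_vecs[OF kn] by blast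
qed

lemma flip_dotp:
  assumes kn: "k < n" and wk: "w k"
  shows "dotp n (x(k := \<not> x k)) w = (\<not> dotp n x w)"
proof -
  let ?S = "{i. i < n \<and> x i \<and> w i}"
  have fin: "finite ?S" by simp
  show ?thesis
  proof (cases "x k")
    case True
    have eq: "{i. i < n \<and> (x(k := \<not> x k)) i \<and> w i} = ?S - {k}" using True by auto
    have kS: "k \<in> ?S" using True kn wk by simp
    define m where "m = card (?S - {k})"
    have cS: "card ?S = Suc m" unfolding m_def using card.remove[OF fin kS] .
    show ?thesis unfolding dotp_def eq m_def[symmetric] cS by simp
  next
    case False
    have eq: "{i. i < n \<and> (x(k := \<not> x k)) i \<and> w i} = insert k ?S" using False kn wk by auto
    have kS: "k \<notin> ?S" using False by simp
    define m where "m = card ?S"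
    have cS: "card (insert k ?S) = Suc m" unfolding m_def using card_insert_disjoint[OF fin kS] .
    show ?thesis unfolding dotp_def eq m_def[symmetric] cS by simp
  qed
qed

lemma char_sum:
  assumes w: "w \<in> vecs n"
  shows "(\<Sum>x\<in>vecs n. sgn_bool (dotp n x w)) = (if w = (\<lambda>_. False) then 2 ^ n else 0)"
proof (cases "w = (\<lambda>_. False)")
  case True
  have d: "dotp n x w = False" for x using True by (simp add: dotp_def)
  have "(\<Sum>x\<in>vecs n. sgn_bool (dotp n x w)) = (\<Sum>x\<in>vecs n. 1)" by (simp add: d sgn_bool_def)
  also have "\<dots> = 2 ^ n" using vecs_finite_card[of n] by simp
  finally show ?thesis using True by simp
next
  case False
  then obtain k where wk: "w k" by auto
  have kn: "k < n"
  proof (rule ccontr)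
    assume "\<not> k < n"
    then have "\<not> w k" using w by (simp add: vecs_def)
    with wk show False by simp
  qed
  have "(\<Sum>x\<in>vecs n. sgn_bool (dotp n x w)) = (\<Sum>x\<in>vecs n. sgn_bool (dotp n (x(k := \<not> x k)) w))"
    by (rule sum.reindex_bij_betw[OF flip_bij[OF kn], symmetric])
  also have "\<dots> = (\<Sum>x\<in>vecs n. - sgn_bool (dotp n x w))"
    by (rule sum.cong[OF refl]) (simp only: flip_dotp[of k n w, OF kn wk] sgn_bool_neg)
  also have "\<dots> = - (\<Sum>x\<in>vecs n. sgn_bool (dotp n x w))"
    by (rule sum_negf)
  finally have "(\<Sum>x\<in>vecs n. sgn_bool (dotp n x w)) = 0" by simp
  then show ?thesis using False by simp
qed

lemma walsh_MM:
  assumes bij: "bij_betw \<sigma> (vecs n) (vecs n)" and u: "u \<in> vecs n \<times> vecs n"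
    and y0: "y0 \<in> vecs n" "\<sigma> y0 = fst u"
  shows "walsh2 n (\<lambda>v. dotp n (fst v) (\<sigma> (snd v)) \<noteq> h (snd v)) u
         = sgn_bool (h y0 \<noteq> dotp n (snd u) y0)"
proof -
  obtain u1 u2 where uu: "u = (u1, u2)" by (cases u)
  have u1: "u1 \<in> vecs n" and u2: "u2 \<in> vecs n" using u uu by auto
  have fin: "finite (vecs n)" using vecs_finite_card by blast
  define c where "c y = sgn_bool (h y \<noteq> dotp n u2 y)" for y
  have trm: "sgn_bool ((dotp n x (\<sigma> y) \<noteq> h y) \<noteq> dotp2 n u (x, y))
     = c y * sgn_bool (dotp n x (\<lambda>i. \<sigma> y i \<noteq> u1 i))" for x y
  proof -
    have "((dotp n x (\<sigma> y) \<noteq> h y) \<noteq> dotp2 n u (x, y))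
       = ((h y \<noteq> dotp n u2 y) \<noteq> (dotp n x (\<sigma> y) \<noteq> dotp n u1 x))"
      by (auto simp: dotp2_def uu)
    also have "\<dots> = ((h y \<noteq> dotp n u2 y) \<noteq> dotp n x (\<lambda>i. \<sigma> y i \<noteq> u1 i))"
      by (simp only: dotp_xor)
    finally have E: "((dotp n x (\<sigma> y) \<noteq> h y) \<noteq> dotp2 n u (x, y))
       = ((h y \<noteq> dotp n u2 y) \<noteq> dotp n x (\<lambda>i. \<sigma> y i \<noteq> u1 i))" .
    show ?thesis by (simp only: E c_def sgn_xor)
  qed
  have inner: "(\<Sum>x\<in>vecs n. sgn_bool (dotp n x (\<lambda>i. \<sigma> y i \<noteq> u1 i)))
      = (if y = y0 then 2 ^ n else 0)" if y: "y \<in> vecs n" for y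
  proof -
    have sy: "\<sigma> y \<in> vecs n" using bij_betw_apply[OF bij y] .
    have wv: "(\<lambda>i. \<sigma> y i \<noteq> u1 i) \<in> vecs n" using sy u1 by (auto simp: vecs_def)
    have "((\<lambda>i. \<sigma> y i \<noteq> u1 i) = (\<lambda>_. False)) = (\<sigma> y = u1)" by (auto simp: fun_eq_iff)
    also have "\<dots> = (y = y0)" using y0 uu y bij by (auto simp: bij_betw_def inj_on_def)
    finally show ?thesis using char_sum[OF wv] by simp
  qed
  have "(\<Sum>v\<in>vecs n \<times> vecs n. sgn_bool ((dotp n (fst v) (\<sigma> (snd v)) \<noteq> h (snd v)) \<noteq> dotp2 n u v))
      = (\<Sum>(x,y)\<in>vecs n \<times> vecs n. c y * sgn_bool (dotp n x (\<lambda>i. \<sigma> y i \<noteq> u1 i)))"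
  proof (intro sum.cong refl)
    fix v :: "(nat \<Rightarrow> bool) \<times> (nat \<Rightarrow> bool)"
    obtain x y where v: "v = (x, y)" by (cases v)
    show "sgn_bool ((dotp n (fst v) (\<sigma> (snd v)) \<noteq> h (snd v)) \<noteq> dotp2 n u v)
      = (case v of (x, y) \<Rightarrow> c y * sgn_bool (dotp n x (\<lambda>i. \<sigma> y i \<noteq> u1 i)))"
      using trm[of x y] v by simp
  qed
  also have "\<dots> = (\<Sum>x\<in>vecs n. \<Sum>y\<in>vecs n. c y * sgn_bool (dotp n x (\<lambda>i. \<sigma> y i \<noteq> u1 i)))"
    by (rule sum.cartesian_product[symmetric])
  also have "\<dots> = (\<Sum>y\<in>vecs n. \<Sum>x\<in>vecs n. c y * sgn_bool (dotp n x (\<lambda>i. \<sigma> y i \<noteq> u1 i)))"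
    by (rule sum.swap)
  also have "\<dots> = (\<Sum>y\<in>vecs n. c y * (if y = y0 then 2 ^ n else 0))"
    by (intro sum.cong refl) (simp only: sum_distrib_left[symmetric] inner)
  also have "\<dots> = c y0 * 2 ^ n"
    using fin y0 by (simp add: if_distrib[of "\<lambda>t. c _ * t"] sum.delta cong: if_cong)
  finally have S: "(\<Sum>v\<in>vecs n \<times> vecs n. sgn_bool ((dotp n (fst v) (\<sigma> (snd v)) \<noteq> h (snd v)) \<noteq> dotp2 n u v)) = c y0 * 2 ^ n" .
  have P: "(2::real) powr (- real (2*n) / 2) * 2 ^ n = 1"
    by (simp add: powr_minus powr_realpow[symmetric] divide_simps)
  show ?thesis unfolding walsh2_def S using P by (simp add: c_def uu)
qed

lemma hadamard_pair:
  assumes t: "1 \<le> t" "t \<le> p" and i: "i < 2 ^ (t - 1)"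
  shows "hadamard p r i * hadamard p r (i + 2 ^ (t - 1)) = sgn_bool (bit r (t - 1))"
proof -
  define k where "k = t - 1"
  have kp: "k < p" using t k_def by simp
  have ik: "i < 2 ^ k" using i k_def by simp
  have bi: "bit i j = (j < k \<and> bit i j)" for j
  proof -
    have "take_bit k i = i" using ik take_bit_nat_eq_self_iff by blast
    then show ?thesis by (metis bit_take_bit_iff)
  qed
  have "i AND 2 ^ k = 0"
    using bi[of k] by (auto intro!: bit_eqI simp: bit_and_iff bit_exp_iff)
  then have "i + 2 ^ k = i OR 2 ^ k" by (rule disjunctive_add_eq_or)
  then have b2: "bit (i + 2 ^ k) j = (bit i j \<or> j = k)" for j
    by (simp add: bit_or_iff bit_exp_iff)
  let ?S = "{j. j < p \<and> bit r j \<and> bit i j}"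
  have fin: "finite ?S" by auto
  have kS: "k \<notin> ?S" using bi[of k] by auto
  have H: "hadamard p r (i + 2 ^ k) = sgn_bool (odd (card ?S) \<noteq> bit r k)"
  proof (cases "bit r k")
    case True
    then have "{j. j < p \<and> bit r j \<and> bit (i + 2 ^ k) j} = insert k ?S" using kp by (auto simp: b2)
    then show ?thesis using True fin kS by (simp add: hadamard_def)
  next
    case False
    then have "{j. j < p \<and> bit r j \<and> bit (i + 2 ^ k) j} = ?S" by (auto simp: b2)
    then show ?thesis using False by (simp add: hadamard_def)
  qed
  show ?thesis unfolding k_def[symmetric] H by (simp add: hadamard_def sgn_bool_def)
qed

theorem mainTheorem5:
  fixes q n p :: nat
    and \<sigma> :: "(nat \<Rightarrow> bool) \<Rightarrow> (nat \<Rightarrow> bool)"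
    and a :: "nat \<Rightarrow> (nat \<Rightarrow> bool) \<Rightarrow> bool"
    and g :: "(nat \<Rightarrow> bool) \<Rightarrow> int"
    and f :: "(nat \<Rightarrow> bool) \<times> (nat \<Rightarrow> bool) \<Rightarrow> int"
    and gi :: "nat \<Rightarrow> (nat \<Rightarrow> bool) \<times> (nat \<Rightarrow> bool) \<Rightarrow> bool"
  assumes "q \<ge> 2" and "even q" and "n \<ge> 1" and "p \<ge> 1"
    and "bij_betw \<sigma> (vecs n) (vecs n)"
    and "\<forall>y\<in>vecs n. 0 \<le> g y \<and> g y < int q \<and>
           g y = (\<Sum>j<p. 2^j * (if a j y then 1 else 0)) mod int q"
    and "\<forall>x\<in>vecs n. \<forall>y\<in>vecs n.
           f (x, y) = (int (q div 2) * (if dotp n x (\<sigma> y) then 1 else 0) + g y) mod int q"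
    and "\<forall>i<2^p. \<forall>x y. gi i (x, y) =
           (dotp n x (\<sigma> y) \<noteq> odd (card {j. j < p \<and> bit i j \<and> a j y}))"
  shows "(\<forall>i<2^p. bent2 n (gi i))
    \<and> (\<forall>u\<in>vecs n \<times> vecs n. \<exists>r<2^p. \<exists>\<epsilon>\<in>{1, -1::real}.
          \<forall>i<2^p. walsh2 n (gi i) u = \<epsilon> * hadamard p r i)
    \<and> (\<forall>u\<in>vecs n \<times> vecs n. \<forall>t. 1 \<le> t \<and> t \<le> p \<longrightarrow>
          (\<exists>c\<in>{1, -1::real}. \<forall>i<2^(t-1).
             walsh2 n (gi i) u * walsh2 n (gi (i + 2^(t-1))) u = c))"
proof -
  note A = assms
  define hh where "hh (i::nat) y = odd (card {j. j < p \<and> bit i j \<and> a j y})" for i y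
  have G: "gi i = (\<lambda>v. dotp n (fst v) (\<sigma> (snd v)) \<noteq> hh i (snd v))" if "i < 2 ^ p" for i
    apply (rule ext)
    subgoal for v by (cases v) (simp add: hh_def A(8) that)
    done
  have key: "\<exists>r<2^p. \<exists>\<epsilon>\<in>{1, -1::real}. \<forall>i<2^p. walsh2 n (gi i) u = \<epsilon> * hadamard p r i"
    if u: "u \<in> vecs n \<times> vecs n" for u
  proof -
    have "fst u \<in> \<sigma> ` vecs n" using u bij_betw_imp_surj_on[OF A(5)] by auto
    then obtain y0 where y0: "y0 \<in> vecs n" "\<sigma> y0 = fst u" by auto
    define r :: nat where "r = take_bit p (horner_sum of_bool 2 (map (\<lambda>j. a j y0) [0..<p]))"
    have br: "bit r j = (j < p \<and> a j y0)" for j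
      by (cases "j < p") (simp_all add: r_def bit_take_bit_iff bit_horner_sum_bit_iff)
    have rp: "r < 2 ^ p" by (simp add: r_def)
    define \<epsilon> where "\<epsilon> = sgn_bool (dotp n (snd u) y0)"
    have "\<epsilon> \<in> {1, -1}" by (simp add: \<epsilon>_def sgn_bool_def)
    moreover have "\<forall>i<2^p. walsh2 n (gi i) u = \<epsilon> * hadamard p r i"
    proof (intro allI impI)
      fix i :: nat assume i: "i < 2 ^ p"
      have "walsh2 n (gi i) u = sgn_bool (hh i y0 \<noteq> dotp n (snd u) y0)"
        unfolding G[OF i] by (rule walsh_MM[OF A(5) u y0])
      also have "{j. j < p \<and> bit i j \<and> a j y0} = {j. j < p \<and> bit r j \<and> bit i j}"
        using br by auto
      then have "hh i y0 = odd (card {j. j < p \<and> bit r j \<and> bit i j})" by (simp add: hh_def)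
      finally have "walsh2 n (gi i) u = sgn_bool (odd (card {j. j < p \<and> bit r j \<and> bit i j}) \<noteq> dotp n (snd u) y0)" .
      then show "walsh2 n (gi i) u = \<epsilon> * hadamard p r i"
        by (simp only: sgn_xor hadamard_def \<epsilon>_def mult.commute)
    qed
    ultimately show ?thesis using rp by blast
  qed
  have P1: "\<forall>i<2^p. bent2 n (gi i)"
  proof (intro allI impI)
    fix i :: nat assume i: "i < 2 ^ p"
    show "bent2 n (gi i)" unfolding bent2_def
    proof
      fix u assume u: "u \<in> vecs n \<times> vecs n"
      from key[OF u] obtain r \<epsilon> where "\<epsilon> \<in> {1, -1::real}" "\<forall>i<2^p. walsh2 n (gi i) u = \<epsilon> * hadamard p r i"
        by blast
      then show "\<bar>walsh2 n (gi i) u\<bar> = 1" using i by (auto simp: hadamard_def sgn_bool_def)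
    qed
  qed
  have P3: "\<forall>u\<in>vecs n \<times> vecs n. \<forall>t. 1 \<le> t \<and> t \<le> p \<longrightarrow>
          (\<exists>c\<in>{1, -1::real}. \<forall>i<2^(t-1).
             walsh2 n (gi i) u * walsh2 n (gi (i + 2^(t-1))) u = c)"
  proof (intro ballI allI impI)
    fix u t assume u: "u \<in> vecs n \<times> vecs n" and t: "1 \<le> t \<and> t \<le> p"
    from key[OF u] obtain r \<epsilon> where e: "\<epsilon> \<in> {1, -1::real}"
      and W: "\<forall>i<2^p. walsh2 n (gi i) u = \<epsilon> * hadamard p r i" by blast
    have ee: "\<epsilon> * \<epsilon> = 1" using e by auto
    have tt: "(2::nat) ^ (t - 1) + 2 ^ (t - 1) \<le> 2 ^ p"
    proof -
      have "(2::nat) ^ (t - 1) + 2 ^ (t - 1) = 2 ^ t" using t by (cases t) auto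
      also have "\<dots> \<le> 2 ^ p" using t by (simp add: power_increasing)
      finally show ?thesis .
    qed
    show "\<exists>c\<in>{1, -1::real}. \<forall>i<2^(t-1).
             walsh2 n (gi i) u * walsh2 n (gi (i + 2^(t-1))) u = c"
    proof (intro bexI allI impI)
      fix i :: nat assume i: "i < 2 ^ (t - 1)"
      have i1: "i < 2 ^ p" using i tt by linarith
      have i2: "i + 2 ^ (t - 1) < 2 ^ p" using i tt by linarith
      have "walsh2 n (gi i) u * walsh2 n (gi (i + 2^(t-1))) u
          = (\<epsilon> * \<epsilon>) * (hadamard p r i * hadamard p r (i + 2 ^ (t - 1)))"
        using W i1 i2 by simp
      also have "\<dots> = sgn_bool (bit r (t - 1))"
        using ee hadamard_pair[of t p i r] t i by simp
      finally show "walsh2 n (gi i) u * walsh2 n (gi (i + 2^(t-1))) u = sgn_bool (bit r (t - 1))" .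
    qed (simp add: sgn_bool_def)
  qed
  have P2: "\<forall>u\<in>vecs n \<times> vecs n. \<exists>r<2^p. \<exists>\<epsilon>\<in>{1, -1::real}.
          \<forall>i<2^p. walsh2 n (gi i) u = \<epsilon> * hadamard p r i"
    using key by blast
  show ?thesis by (intro conjI P1 P2 P3)
qed

end
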